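(* Let $X$ be a locally compact Hausdorff space and $\sigma:X\to X$ a homeomorphism. Then each of the following sets is dense in $X$: (1) $\mathrm{Aper}(\sigma)\cup\bigcup_{q\ge1}\mathrm{Fix}_q(\sigma)^\circ$; (2) $\mathrm{Aper}(\sigma)\cup\big(\bigcup_{q\ge1}\mathrm{Fix}_q(\sigma)\big)^\circ$; (3) $\mathrm{Aper}(\sigma)\cup\bigcup_{q\ge1}\mathrm{Per}_q(\sigma)^\circ$; (4) $\mathrm{Aper}(\sigma)\cup\big(\bigcup_{q\ge1}\mathrm{Per}_q(\sigma)\big)^\circ$.
   Context: For $q\ge1$, $\mathrm{Fix}_q(\sigma)=\{x\in X:\sigma^qx=x\}$ and $\mathrm{Per}_q(\sigma)$ is the set of points of least period exactly $q$; $\mathrm{Aper}(\sigma)$ is the set of non-periodic points. A superscript $\circ$ denotes interior in $X$. *)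

theory Defs
  imports "HOL-Analysis.Analysis"
begin

definition Fix :: "nat \<Rightarrow> ('a \<Rightarrow> 'a) \<Rightarrow> 'a set" where
  "Fix q \<sigma> = {x. (\<sigma> ^^ q) x = x}"

definition Per :: "nat \<Rightarrow> ('a \<Rightarrow> 'a) \<Rightarrow> 'a set" where
  "Per q \<sigma> = {x. (\<sigma> ^^ q) x = x \<and> (\<forall>k. 0 < k \<and> k < q \<longrightarrow> (\<sigma> ^^ k) x \<noteq> x)}"

definition Aper :: "('a \<Rightarrow> 'a) \<Rightarrow> 'a set" where
  "Aper \<sigma> = {x. \<forall>q\<ge>1. (\<sigma> ^^ q) x \<noteq> x}"

end

theory Submission
  imports Defs
begin

lemma Hausdorff_t2: "Hausdorff_space (euclidean :: 'a::t2_space topology)"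
  unfolding Hausdorff_space_def
proof (intro allI impI)
  fix x y :: 'a
  assume "x \<in> topspace euclidean \<and> y \<in> topspace euclidean \<and> x \<noteq> y"
  then have "x \<noteq> y" by blast
  then obtain U V where UV: "open U" "open V" "x \<in> U" "y \<in> V" "U \<inter> V = {}"
    using hausdorff[OF \<open>x \<noteq> y\<close>] by blast
  then show "\<exists>U V. openin euclidean U \<and> openin euclidean V \<and> x \<in> U \<and> y \<in> V \<and> disjnt U V"
    by (intro exI[of _ U] exI[of _ V]) (simp add: disjnt_def)
qed

lemma baire_local:
  fixes F :: "nat \<Rightarrow> 'a::t2_space set"
  assumes lc: "locally_compact_space (euclidean :: 'a topology)"
    and U: "open U" "U \<noteq> {}" and I: "countable I"
    and cl: "\<And>k. k \<in> I \<Longrightarrow> closed (F k)"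
    and cov: "U \<subseteq> (\<Union>k\<in>I. F k)"
  shows "\<exists>k\<in>I. U \<inter> interior (F k) \<noteq> {}"
proof (rule ccontr)
  assume H: "\<not> ?thesis"
  let ?X = "subtopology (euclidean :: 'a topology) U"
  have reg: "regular_space (euclidean :: 'a topology)"
    by (rule locally_compact_Hausdorff_imp_regular_space[OF lc Hausdorff_t2])
  have "?X interior_of \<Union>((\<lambda>k. F k \<inter> U) ` I) = {}"
  proof (rule Baire_category_alt)
    show "completely_metrizable_space ?X \<or> locally_compact_space ?X \<and> regular_space ?X"
    proof -
      have "locally_compact_space ?X"
        by (rule locally_compact_space_open_subset[OF _ lc]) (use U Hausdorff_t2 in auto)
      moreover have "regular_space ?X" by (rule regular_space_subtopology[OF reg])
      ultimately show ?thesis by blast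
    qed
    show "countable ((\<lambda>k. F k \<inter> U) ` I)" using I by simp
    fix T assume "T \<in> (\<lambda>k. F k \<inter> U) ` I"
    then obtain k where k: "k \<in> I" "T = F k \<inter> U" by auto
    show "closedin ?X T \<and> ?X interior_of T = {}"
    proof
      have "closedin ?X (U \<inter> F k)" by (rule closedin_closed_Int) (rule cl[OF k(1)])
      moreover have "T = U \<inter> F k" using k(2) by blast
      ultimately show "closedin ?X T" by simp
      have "?X interior_of T = U \<inter> interior (F k \<inter> U)"
        using k U by (simp add: interior_of_subtopology_open)
      also have "\<dots> \<subseteq> U \<inter> interior (F k)" by (intro Int_mono order_refl interior_mono Int_lower1)
      finally show "?X interior_of T = {}" using H k by auto
    qed
  qed
  moreover have "\<Union>((\<lambda>k. F k \<inter> U) ` I) = U" using cov by auto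
  moreover have "?X interior_of U = U" using U by (simp add: interior_of_subtopology_open interior_open)
  ultimately show False using U by simp
qed

lemma cont_iter:
  fixes f :: "'a::topological_space \<Rightarrow> 'a"
  assumes "continuous_on UNIV f"
  shows "continuous_on UNIV (f ^^ n)"
proof (induction n)
  case 0 show ?case by (subst funpow.simps(1)) (simp add: continuous_on_id)
next
  case (Suc n)
  show ?case
    by (subst funpow.simps(2), rule continuous_on_compose[OF Suc continuous_on_subset[OF assms subset_UNIV]])
qed

lemma closed_Fix:
  fixes \<sigma> :: "'a::t2_space \<Rightarrow> 'a"
  assumes "continuous_on UNIV \<sigma>"
  shows "closed (Fix q \<sigma>)"
  unfolding Fix_def
  by (rule closed_Collect_eq) (auto intro: cont_iter[OF assms] continuous_on_id)

theorem corollaryA3: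
  fixes \<sigma> :: "'a::t2_space \<Rightarrow> 'a"
  assumes "locally_compact_space (euclidean :: 'a topology)"
    and "homeomorphic_map euclidean euclidean \<sigma>"
  shows "closure (Aper \<sigma> \<union> (\<Union>q\<in>{1..}. interior (Fix q \<sigma>))) = UNIV \<and>
         closure (Aper \<sigma> \<union> interior (\<Union>q\<in>{1..}. Fix q \<sigma>)) = UNIV \<and>
         closure (Aper \<sigma> \<union> (\<Union>q\<in>{1..}. interior (Per q \<sigma>))) = UNIV \<and>
         closure (Aper \<sigma> \<union> interior (\<Union>q\<in>{1..}. Per q \<sigma>)) = UNIV"
proof -
  have cont: "continuous_on UNIV \<sigma>"
    using homeomorphic_imp_continuous_map[OF assms(2)] by (simp only: continuous_map_iff_continuous2)
  have clF: "\<And>q. closed (Fix q \<sigma>)" using closed_Fix[OF cont] .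
  define S where "S = Aper \<sigma> \<union> (\<Union>q\<in>{1..}. interior (Per q \<sigma>))"
  have meet: "U \<inter> S \<noteq> {}" if U: "open U" "U \<noteq> {}" for U
  proof (rule ccontr)
    assume "\<not> U \<inter> S \<noteq> {}"
    then have UA: "U \<inter> Aper \<sigma> = {}" and UP: "\<And>q. q \<ge> 1 \<Longrightarrow> U \<inter> interior (Per q \<sigma>) = {}"
      unfolding S_def by auto
    have cov: "U \<subseteq> (\<Union>q\<in>{1..}. Fix q \<sigma>)"
      using UA by (auto simp: Aper_def Fix_def)
    define P where "P q \<longleftrightarrow> q \<ge> 1 \<and> (\<exists>W. open W \<and> W \<noteq> {} \<and> W \<subseteq> U \<inter> Fix q \<sigma>)" for q
    obtain q0 where "q0 \<in> {1..}" "U \<inter> interior (Fix q0 \<sigma>) \<noteq> {}"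
      using baire_local[OF assms(1) U _ _ cov] clF by auto
    then have "P q0" unfolding P_def
      by (intro conjI exI[of _ "U \<inter> interior (Fix q0 \<sigma>)"])
         (auto simp: U open_Int dest: interior_subset[THEN subsetD])
    define q where "q = (LEAST q. P q)"
    have Pq: "P q" using \<open>P q0\<close> q_def by (metis LeastI)
    have minq: "\<And>k. k < q \<Longrightarrow> \<not> P k" using q_def not_less_Least by blast
    from Pq obtain W where W: "q \<ge> 1" "open W" "W \<noteq> {}" "W \<subseteq> U \<inter> Fix q \<sigma>"
      unfolding P_def by auto
    define W' where "W' = W - (\<Union>k\<in>{1..<q}. Fix k \<sigma>)"
    have oW': "open W'" unfolding W'_def using W clF by (intro open_Diff closed_UN) auto
    show False
    proof (cases "W' = {}")
      case True
      then have "W \<subseteq> (\<Union>k\<in>{1..<q}. Fix k \<sigma>)" unfolding W'_def by auto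
      then have "\<exists>k\<in>{1..<q}. W \<inter> interior (Fix k \<sigma>) \<noteq> {}"
        by (intro baire_local[OF assms(1) W(2,3)]) (auto simp: clF)
      then obtain k where k: "k \<in> {1..<q}" "W \<inter> interior (Fix k \<sigma>) \<noteq> {}"
        by blast
      have "P k" unfolding P_def using k W
        by (intro conjI exI[of _ "W \<inter> interior (Fix k \<sigma>)"])
           (auto simp: open_Int dest: interior_subset[THEN subsetD])
      then show False using minq k by auto
    next
      case False
      have "W' \<subseteq> Per q \<sigma>" using W unfolding W'_def Per_def Fix_def by auto
      then have "W' \<subseteq> interior (Per q \<sigma>)" using oW' by (simp add: interior_maximal)
      moreover have "W' \<subseteq> U" using W unfolding W'_def by auto
      ultimately show False using UP[OF W(1)] False by auto
    qed
  qed
  have S3: "closure S = UNIV"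
  proof (rule ccontr)
    assume "closure S \<noteq> UNIV"
    then have "- closure S \<noteq> {}" by auto
    then have "(- closure S) \<inter> S \<noteq> {}"
      by (intro meet open_Compl closed_closure)
    then show False using closure_subset by auto
  qed
  have PF: "\<And>q. Per q \<sigma> \<subseteq> Fix q \<sigma>" by (auto simp: Per_def Fix_def)
  have i1: "S \<subseteq> Aper \<sigma> \<union> (\<Union>q\<in>{1..}. interior (Fix q \<sigma>))"
    unfolding S_def using interior_mono[OF PF] by blast
  have i2: "Aper \<sigma> \<union> (\<Union>q\<in>{1..}. interior (Fix q \<sigma>)) \<subseteq> Aper \<sigma> \<union> interior (\<Union>q\<in>{1..}. Fix q \<sigma>)"
  proof -
    have "(\<Union>q\<in>{1..}. interior (Fix q \<sigma>)) \<subseteq> interior (\<Union>q\<in>{1..}. Fix q \<sigma>)"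
      by (intro interior_maximal open_UN ballI open_interior) (auto dest: interior_subset[THEN subsetD])
    then show ?thesis by blast
  qed
  have i4: "S \<subseteq> Aper \<sigma> \<union> interior (\<Union>q\<in>{1..}. Per q \<sigma>)"
  proof -
    have "(\<Union>q\<in>{1..}. interior (Per q \<sigma>)) \<subseteq> interior (\<Union>q\<in>{1..}. Per q \<sigma>)"
      by (intro interior_maximal open_UN ballI open_interior) (auto dest: interior_subset[THEN subsetD])
    then show ?thesis unfolding S_def by blast
  qed
  show ?thesis
    using S3 closure_mono[OF i1] closure_mono[OF i2] closure_mono[OF order_trans[OF i1 i2]]
      closure_mono[OF i4] unfolding S_def by auto
qed

end
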